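(* Consider any demand-private coded caching scheme with $N=2$ files and $K=2$ users. Then for every $i\in\{0,1\}$ and $j\in\{0,1\}$, with $\tilde i=(i+1)\bmod 2$, the conditional joint distributions satisfy $(X,Z_1,W_j\mid D_1=j)\sim(X,Z_1,W_j\mid D_0=i,D_1=j)\sim(X,Z_1,W_j\mid D_0=\tilde i,D_1=j)$ and $(X,Z_0,W_j\mid D_0=j)\sim(X,Z_0,W_j\mid D_0=j,D_1=i)\sim(X,Z_0,W_j\mid D_0=j,D_1=\tilde i)$, where $\sim$ denotes equality of (conditional) distributions.
   Context: Setting ($N=K=2$): files $W_0,W_1$ independent, uniform on $[2^F]=\{0,\dots,2^F-1\}$; demands $D_0,D_1$ of users $0,1$ independent and uniform on $\{0,1\}$. User $k$ shares a key $S_k$ (finite alphabet) with the server; the server has private randomness $P$ (finite alphabet); $P,S_0,S_1,D_0,D_1,W_0,W_1$ are mutually independent. Cache content $Z_k=(C_k(S_k,P,W_0,W_1),S_k)$ with $C_k$ valued in $[2^{MF}]$; broadcast $X=(E(W_0,W_1,D_0,D_1,P,S_0,S_1),J(D_0,D_1,P,S_0,S_1))$ with $E$ valued in $[2^{RF}]$ and $J$ valued in a finite set of negligible $\log_2$-size relative to $F$. The scheme is demand-private if (decodability) $W_{D_k}$ is a deterministic function of $(D_k,S_k,X,Z_k)$ for each $k$, and (privacy) $I(D_1;Z_0,X,D_0)=0$ and $I(D_0;Z_1,X,D_1)=0$. *)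

theory Defs
  imports "HOL-Probability.Probability"
begin

text \<open>Sample space of the N = K = 2 demand-private coded caching setting.
  An outcome is (P, S0, S1, D0, D1, W0, W1).\<close>

type_synonym ('p, 's0, 's1) outcome = "'p \<times> 's0 \<times> 's1 \<times> nat \<times> nat \<times> nat \<times> nat"

definition joint ::
  "nat \<Rightarrow> 'p pmf \<Rightarrow> 's0 pmf \<Rightarrow> 's1 pmf \<Rightarrow> ('p, 's0, 's1) outcome pmf" where
  "joint F pP pS0 pS1 =
     do { p \<leftarrow> pP; s0 \<leftarrow> pS0; s1 \<leftarrow> pS1;
          d0 \<leftarrow> pmf_of_set {0, 1}; d1 \<leftarrow> pmf_of_set {0, 1};
          w0 \<leftarrow> pmf_of_set {..<2 ^ F}; w1 \<leftarrow> pmf_of_set {..<2 ^ F};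
          return_pmf (p, s0, s1, d0, d1, w0, w1) }"

definition rvP :: "('p, 's0, 's1) outcome \<Rightarrow> 'p" where "rvP \<omega> = fst \<omega>"
definition rvS0 :: "('p, 's0, 's1) outcome \<Rightarrow> 's0" where "rvS0 \<omega> = fst (snd \<omega>)"
definition rvS1 :: "('p, 's0, 's1) outcome \<Rightarrow> 's1" where "rvS1 \<omega> = fst (snd (snd \<omega>))"
definition rvD0 :: "('p, 's0, 's1) outcome \<Rightarrow> nat" where "rvD0 \<omega> = fst (snd (snd (snd \<omega>)))"
definition rvD1 :: "('p, 's0, 's1) outcome \<Rightarrow> nat" where "rvD1 \<omega> = fst (snd (snd (snd (snd \<omega>))))"
definition rvW0 :: "('p, 's0, 's1) outcome \<Rightarrow> nat" where "rvW0 \<omega> = fst (snd (snd (snd (snd (snd \<omega>)))))"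
definition rvW1 :: "('p, 's0, 's1) outcome \<Rightarrow> nat" where "rvW1 \<omega> = snd (snd (snd (snd (snd (snd \<omega>)))))"

definition rvD :: "nat \<Rightarrow> ('p, 's0, 's1) outcome \<Rightarrow> nat" where
  "rvD k \<omega> = (if k = 0 then rvD0 \<omega> else rvD1 \<omega>)"
definition rvW :: "nat \<Rightarrow> ('p, 's0, 's1) outcome \<Rightarrow> nat" where
  "rvW j \<omega> = (if j = 0 then rvW0 \<omega> else rvW1 \<omega>)"

definition rvX ::
  "(nat \<Rightarrow> nat \<Rightarrow> nat \<Rightarrow> nat \<Rightarrow> 'p \<Rightarrow> 's0 \<Rightarrow> 's1 \<Rightarrow> nat) \<Rightarrow>
   (nat \<Rightarrow> nat \<Rightarrow> 'p \<Rightarrow> 's0 \<Rightarrow> 's1 \<Rightarrow> 'j) \<Rightarrow> ('p, 's0, 's1) outcome \<Rightarrow> nat \<times> 'j" where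
  "rvX E J \<omega> = (E (rvW0 \<omega>) (rvW1 \<omega>) (rvD0 \<omega>) (rvD1 \<omega>) (rvP \<omega>) (rvS0 \<omega>) (rvS1 \<omega>),
                J (rvD0 \<omega>) (rvD1 \<omega>) (rvP \<omega>) (rvS0 \<omega>) (rvS1 \<omega>))"

definition rvZ0 ::
  "('s0 \<Rightarrow> 'p \<Rightarrow> nat \<Rightarrow> nat \<Rightarrow> nat) \<Rightarrow> ('p, 's0, 's1) outcome \<Rightarrow> nat \<times> 's0" where
  "rvZ0 C0 \<omega> = (C0 (rvS0 \<omega>) (rvP \<omega>) (rvW0 \<omega>) (rvW1 \<omega>), rvS0 \<omega>)"
definition rvZ1 ::
  "('s1 \<Rightarrow> 'p \<Rightarrow> nat \<Rightarrow> nat \<Rightarrow> nat) \<Rightarrow> ('p, 's0, 's1) outcome \<Rightarrow> nat \<times> 's1" where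
  "rvZ1 C1 \<omega> = (C1 (rvS1 \<omega>) (rvP \<omega>) (rvW0 \<omega>) (rvW1 \<omega>), rvS1 \<omega>)"

definition prob_ev :: "'a pmf \<Rightarrow> ('a \<Rightarrow> bool) \<Rightarrow> real" where
  "prob_ev \<Omega> A = measure_pmf.prob \<Omega> {\<omega>. A \<omega>}"

definition mutual_info :: "'a pmf \<Rightarrow> ('a \<Rightarrow> 'u) \<Rightarrow> ('a \<Rightarrow> 'v) \<Rightarrow> real" where
  "mutual_info \<Omega> U V =
     (\<Sum>(u, v) \<in> (\<lambda>\<omega>. (U \<omega>, V \<omega>)) ` set_pmf \<Omega>.
        prob_ev \<Omega> (\<lambda>\<omega>. U \<omega> = u \<and> V \<omega> = v) *
        log 2 (prob_ev \<Omega> (\<lambda>\<omega>. U \<omega> = u \<and> V \<omega> = v) /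
               (prob_ev \<Omega> (\<lambda>\<omega>. U \<omega> = u) * prob_ev \<Omega> (\<lambda>\<omega>. V \<omega> = v))))"

definition cond_dist :: "'a pmf \<Rightarrow> ('a \<Rightarrow> 'u) \<Rightarrow> ('a \<Rightarrow> bool) \<Rightarrow> 'u pmf" where
  "cond_dist \<Omega> U A = map_pmf U (cond_pmf \<Omega> {\<omega>. A \<omega>})"

text \<open>A demand-private scheme for N = K = 2 with file size F, memory M, rate R.\<close>
definition demand_private_scheme ::
  "nat \<Rightarrow> real \<Rightarrow> real \<Rightarrow> 'p pmf \<Rightarrow> 's0 pmf \<Rightarrow> 's1 pmf \<Rightarrow>
   ('s0 \<Rightarrow> 'p \<Rightarrow> nat \<Rightarrow> nat \<Rightarrow> nat) \<Rightarrow> ('s1 \<Rightarrow> 'p \<Rightarrow> nat \<Rightarrow> nat \<Rightarrow> nat) \<Rightarrow>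
   (nat \<Rightarrow> nat \<Rightarrow> nat \<Rightarrow> nat \<Rightarrow> 'p \<Rightarrow> 's0 \<Rightarrow> 's1 \<Rightarrow> nat) \<Rightarrow>
   (nat \<Rightarrow> nat \<Rightarrow> 'p \<Rightarrow> 's0 \<Rightarrow> 's1 \<Rightarrow> 'j) \<Rightarrow> bool" where
  "demand_private_scheme F M R pP pS0 pS1 C0 C1 E J \<longleftrightarrow>
     (let \<Omega> = joint F pP pS0 pS1 in
      \<comment> \<open>cache and transmission alphabets\<close>
      (\<forall>s p w0 w1. real (C0 s p w0 w1) < 2 powr (M * real F)) \<and>
      (\<forall>s p w0 w1. real (C1 s p w0 w1) < 2 powr (M * real F)) \<and>
      (\<forall>w0 w1 d0 d1 p s0 s1. real (E w0 w1 d0 d1 p s0 s1) < 2 powr (R * real F)) \<and>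
      \<comment> \<open>decodability: W_{D_k} is a deterministic function of (D_k, S_k, X, Z_k)\<close>
      (\<exists>g. \<forall>\<omega>\<in>set_pmf \<Omega>.
         g (rvD0 \<omega>, rvS0 \<omega>, rvX E J \<omega>, rvZ0 C0 \<omega>) = rvW (rvD0 \<omega>) \<omega>) \<and>
      (\<exists>g. \<forall>\<omega>\<in>set_pmf \<Omega>.
         g (rvD1 \<omega>, rvS1 \<omega>, rvX E J \<omega>, rvZ1 C1 \<omega>) = rvW (rvD1 \<omega>) \<omega>) \<and>
      \<comment> \<open>privacy\<close>
      mutual_info \<Omega> rvD1 (\<lambda>\<omega>. (rvZ0 C0 \<omega>, rvX E J \<omega>, rvD0 \<omega>)) = 0 \<and>
      mutual_info \<Omega> rvD0 (\<lambda>\<omega>. (rvZ1 C1 \<omega>, rvX E J \<omega>, rvD1 \<omega>)) = 0)"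

end

theory Submission imports Defs begin

lemma mi_zero_indep:
  fixes \<Omega> :: "'a pmf" and U :: "'a \<Rightarrow> 'u" and V :: "'a \<Rightarrow> 'v"
  assumes fin: "finite (set_pmf \<Omega>)" and mi: "mutual_info \<Omega> U V = 0"
  shows "map_pmf (\<lambda>\<omega>. (U \<omega>, V \<omega>)) \<Omega> = pair_pmf (map_pmf U \<Omega>) (map_pmf V \<Omega>)"
proof -
  define P where "P = map_pmf (\<lambda>\<omega>. (U \<omega>, V \<omega>)) \<Omega>"
  define Q where "Q = pair_pmf (map_pmf U \<Omega>) (map_pmf V \<Omega>)"
  define S where "S = set_pmf P"
  have finS: "finite S" unfolding S_def P_def using fin by simp
  have pP: "prob_ev \<Omega> (\<lambda>\<omega>. U \<omega> = u \<and> V \<omega> = v) = pmf P (u, v)" for u v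
    unfolding prob_ev_def P_def pmf_map by (simp add: vimage_def)
  have pQ: "prob_ev \<Omega> (\<lambda>\<omega>. U \<omega> = u) * prob_ev \<Omega> (\<lambda>\<omega>. V \<omega> = v) = pmf Q (u, v)" for u v
    unfolding prob_ev_def Q_def pmf_pair pmf_map by (simp add: vimage_def)
  have mi': "(\<Sum>x\<in>S. pmf P x * log 2 (pmf P x / pmf Q x)) = 0"
    using mi unfolding mutual_info_def pP pQ S_def P_def
    by (simp add: case_prod_beta)
  have Ppos: "pmf P x > 0" if "x \<in> S" for x
    using that unfolding S_def by (simp add: pmf_positive)
  have Qpos: "pmf Q x > 0" if "x \<in> S" for x
  proof -
    have "x \<in> set_pmf Q" using that unfolding S_def P_def Q_def by auto
    then show ?thesis by (simp add: pmf_positive)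
  qed
  define t where "t x = pmf P x * log 2 (pmf P x / pmf Q x) - (pmf P x - pmf Q x) / ln 2" for x
  have tnn: "t x \<ge> 0" if "x \<in> S" for x
  proof -
    have p: "pmf P x > 0" and q: "pmf Q x > 0" using Ppos Qpos that by auto
    have "ln (pmf Q x / pmf P x) \<le> pmf Q x / pmf P x - 1" using p q by (intro ln_le_minus_one) simp
    then have "pmf P x * ln (pmf Q x / pmf P x) \<le> pmf P x * (pmf Q x / pmf P x - 1)"
      using p by (intro mult_left_mono) auto
    also have "\<dots> = pmf Q x - pmf P x" using p by (simp add: field_simps)
    finally have a: "pmf P x * ln (pmf P x / pmf Q x) \<ge> pmf P x - pmf Q x"
      using p q by (simp add: ln_div algebra_simps)
    have "t x = (pmf P x * ln (pmf P x / pmf Q x) - (pmf P x - pmf Q x)) / ln 2"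
      unfolding t_def log_def by (simp add: field_simps)
    then show ?thesis using a by simp
  qed
  have sP: "(\<Sum>x\<in>S. pmf P x) = 1" using finS unfolding S_def by (intro sum_pmf_eq_1) auto
  have sQ: "(\<Sum>x\<in>S. pmf Q x) \<le> 1"
    using measure_measure_pmf_finite[OF finS, of Q] measure_pmf.prob_le_1[of Q S] by simp
  have st: "(\<Sum>x\<in>S. t x) = - (1 - (\<Sum>x\<in>S. pmf Q x)) / ln 2"
    unfolding t_def sum_subtractf mi' sum_divide_distrib[symmetric] sum_subtractf sP by (simp add: field_simps)
  have st0: "(\<Sum>x\<in>S. t x) \<ge> 0" using tnn by (simp add: sum_nonneg)
  have sQ1: "(\<Sum>x\<in>S. pmf Q x) = 1"
  proof -
    have "- (1 - (\<Sum>x\<in>S. pmf Q x)) / ln 2 \<ge> 0" using st st0 by simp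
    then have "- (1 - (\<Sum>x\<in>S. pmf Q x)) \<ge> 0" by (simp add: zero_le_divide_iff)
    then show ?thesis using sQ by simp
  qed
  have t0: "t x = 0" if "x \<in> S" for x
    using sum_nonneg_eq_0_iff[OF finS, of t] tnn st sQ1 that by auto
  have eqS: "pmf P x = pmf Q x" if "x \<in> S" for x
  proof -
    have p: "pmf P x > 0" and q: "pmf Q x > 0" using Ppos Qpos that by auto
    define r where "r = pmf Q x / pmf P x"
    have r: "r > 0" using p q by (simp add: r_def)
    have "pmf P x * ln (pmf P x / pmf Q x) = pmf P x - pmf Q x"
      using t0[OF that] unfolding t_def log_def by (simp add: field_simps)
    moreover have "pmf P x * (1 - r) = pmf P x - pmf Q x"
      using p by (simp add: r_def right_diff_distrib)
    moreover have "pmf P x * (- ln r) = pmf P x * ln (pmf P x / pmf Q x)"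
      using p q by (simp add: r_def ln_div)
    ultimately have "pmf P x * (- ln r) = pmf P x * (1 - r)" by simp
    then have "pmf P x * (- ln r) = pmf P x * (1 - r)" by simp
    then have "- ln r = 1 - r" using p by (metis mult_cancel_left less_irrefl)
    then have "ln r = r - 1" by simp
    then have "r = 1" using ln_eq_minus_one r by blast
    then show ?thesis using p by (simp add: r_def)
  qed
  have "pmf P x = pmf Q x" for x
  proof (cases "x \<in> S")
    case True then show ?thesis by (rule eqS)
  next
    case False
    have "pmf Q x + (\<Sum>y\<in>S. pmf Q y) = (\<Sum>y\<in>insert x S. pmf Q y)"
      using False finS by simp
    also have "\<dots> \<le> 1"
      using measure_measure_pmf_finite[of "insert x S" Q] finS measure_pmf.prob_le_1[of Q "insert x S"] by simp
    finally have "pmf Q x \<le> 0" using sQ1 by simp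
    then have "pmf Q x = 0" using pmf_nonneg[of Q x] by linarith
    moreover have "pmf P x = 0" using False unfolding S_def by (simp add: set_pmf_iff)
    ultimately show ?thesis by simp
  qed
  then show ?thesis unfolding P_def Q_def by (intro pmf_eqI) simp
qed
lemma measure_cond_pmf:
  assumes "set_pmf p \<inter> s \<noteq> {}"
  shows "measure (measure_pmf (cond_pmf p s)) A = measure (measure_pmf p) (s \<inter> A) / measure (measure_pmf p) s"
  using assms by (simp add: cond_pmf.rep_eq emeasure_measure_pmf_not_zero)

lemma measure_eq_on_support:
  assumes "\<And>\<omega>. \<omega> \<in> set_pmf p \<Longrightarrow> \<omega> \<in> A \<longleftrightarrow> \<omega> \<in> B"
  shows "measure (measure_pmf p) A = measure (measure_pmf p) B"
proof -
  have "A \<inter> set_pmf p = B \<inter> set_pmf p" using assms by blast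
  then show ?thesis by (metis measure_Int_set_pmf)
qed

lemma cond_indep:
  fixes \<Omega> :: "'a pmf" and Da Db :: "'a \<Rightarrow> nat" and Y :: "'a \<Rightarrow> 'y::countable"
    and V :: "'a \<Rightarrow> 'v" and h :: "'y \<Rightarrow> 'v" and Dbf :: "'y \<Rightarrow> nat"
  assumes ind: "map_pmf (\<lambda>\<omega>. (Da \<omega>, Y \<omega>)) \<Omega> = pair_pmf (map_pmf Da \<Omega>) (map_pmf Y \<Omega>)"
    and Db: "\<And>\<omega>. Db \<omega> = Dbf (Y \<omega>)"
    and pa: "measure \<Omega> {\<omega>. Da \<omega> = i} > 0" and pb: "measure \<Omega> {\<omega>. Db \<omega> = j} > 0"
    and hV: "\<And>\<omega>. \<omega> \<in> set_pmf \<Omega> \<Longrightarrow> Db \<omega> = j \<Longrightarrow> V \<omega> = h (Y \<omega>)"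
  shows "cond_dist \<Omega> V (\<lambda>\<omega>. Db \<omega> = j) = cond_dist \<Omega> V (\<lambda>\<omega>. Da \<omega> = i \<and> Db \<omega> = j)"
proof -
  have prod: "measure \<Omega> {\<omega>. Da \<omega> \<in> A \<and> Y \<omega> \<in> B} = measure \<Omega> {\<omega>. Da \<omega> \<in> A} * measure \<Omega> {\<omega>. Y \<omega> \<in> B}"
    for A B
  proof -
    have "measure \<Omega> {\<omega>. Da \<omega> \<in> A \<and> Y \<omega> \<in> B} = measure (map_pmf (\<lambda>\<omega>. (Da \<omega>, Y \<omega>)) \<Omega>) (A \<times> B)"
      by (simp add: vimage_def)
    also have "\<dots> = measure (map_pmf Da \<Omega>) A * measure (map_pmf Y \<Omega>) B"
      unfolding ind by (rule measure_pmf_prob_product) simp_all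
    finally show ?thesis by (simp add: vimage_def)
  qed
  define Ab where "Ab = {\<omega>. Db \<omega> = j}"
  define Aab where "Aab = {\<omega>. Da \<omega> = i \<and> Db \<omega> = j}"
  have neA: "set_pmf \<Omega> \<inter> S \<noteq> {}" if "measure \<Omega> S > 0" for S
  proof
    assume "set_pmf \<Omega> \<inter> S = {}"
    then have "measure \<Omega> (S \<inter> set_pmf \<Omega>) = 0" by (simp add: Int_commute)
    then show False using that by (simp add: measure_Int_set_pmf)
  qed
  have mAab: "measure \<Omega> Aab = measure \<Omega> {\<omega>. Da \<omega> = i} * measure \<Omega> Ab"
  proof -
    have "measure \<Omega> Aab = measure \<Omega> {\<omega>. Da \<omega> \<in> {i} \<and> Y \<omega> \<in> {y. Dbf y = j}}"
      unfolding Aab_def using Db by simp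
    also have "\<dots> = measure \<Omega> {\<omega>. Da \<omega> = i} * measure \<Omega> Ab"
      unfolding prod Ab_def using Db by simp
    finally show ?thesis .
  qed
  have pab: "measure \<Omega> Aab > 0" using mAab pa pb Ab_def by simp
  have pb': "measure \<Omega> Ab > 0" using pb Ab_def by simp
  show ?thesis
  proof (rule pmf_eqI)
    fix v
    define H where "H = {y. Dbf y = j \<and> h y = v}"
    have e1: "measure \<Omega> (Ab \<inter> V -` {v}) = measure \<Omega> {\<omega>. Y \<omega> \<in> H}"
      by (rule measure_eq_on_support) (auto simp: Ab_def H_def Db hV)
    have e2: "measure \<Omega> (Aab \<inter> V -` {v}) = measure \<Omega> {\<omega>. Da \<omega> \<in> {i} \<and> Y \<omega> \<in> H}"
      by (rule measure_eq_on_support) (auto simp: Aab_def H_def Db hV)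
    have "pmf (cond_dist \<Omega> V (\<lambda>\<omega>. Db \<omega> = j)) v = measure \<Omega> (Ab \<inter> V -` {v}) / measure \<Omega> Ab"
      unfolding cond_dist_def pmf_map Ab_def[symmetric]
      using neA[OF pb'] by (simp add: measure_cond_pmf)
    also have "\<dots> = measure \<Omega> {\<omega>. Y \<omega> \<in> H} / measure \<Omega> Ab" using e1 by simp
    also have "\<dots> = (measure \<Omega> {\<omega>. Da \<omega> = i} * measure \<Omega> {\<omega>. Y \<omega> \<in> H}) / measure \<Omega> Aab"
      using mAab pa by simp
    also have "\<dots> = measure \<Omega> (Aab \<inter> V -` {v}) / measure \<Omega> Aab"
      using e2 prod[of "{i}" H] by simp
    also have "\<dots> = pmf (cond_dist \<Omega> V (\<lambda>\<omega>. Da \<omega> = i \<and> Db \<omega> = j)) v"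
      unfolding cond_dist_def pmf_map Aab_def[symmetric]
      using neA[OF pab] by (simp add: measure_cond_pmf)
    finally show "pmf (cond_dist \<Omega> V (\<lambda>\<omega>. Db \<omega> = j)) v = pmf (cond_dist \<Omega> V (\<lambda>\<omega>. Da \<omega> = i \<and> Db \<omega> = j)) v" .
  qed
qed

lemma joint_finite: "finite (set_pmf (joint F (pP :: 'p::finite pmf) (pS0 :: 's0::finite pmf) (pS1 :: 's1::finite pmf)))"
proof (rule finite_subset)
  show "set_pmf (joint F pP pS0 pS1) \<subseteq> UNIV \<times> UNIV \<times> UNIV \<times> {0,1} \<times> {0,1} \<times> {..<2^F} \<times> {..<2^F}"
    unfolding joint_def by (auto simp: set_pmf_of_set lessThan_empty_iff)
qed simp

lemma joint_D0: "map_pmf rvD0 (joint F pP pS0 pS1) = pmf_of_set {0,1}"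
  unfolding joint_def rvD0_def by (simp add: map_bind_pmf bind_return_pmf')

lemma joint_D1: "map_pmf rvD1 (joint F pP pS0 pS1) = pmf_of_set {0,1}"
  unfolding joint_def rvD1_def by (simp add: map_bind_pmf bind_return_pmf')

lemma joint_Dpos:
  assumes "i \<in> {0,1::nat}"
  shows "measure (joint F pP pS0 pS1) {\<omega>. rvD0 \<omega> = i} > 0" "measure (joint F pP pS0 pS1) {\<omega>. rvD1 \<omega> = i} > 0"
proof -
  have "measure (joint F pP pS0 pS1) {\<omega>. rvD0 \<omega> = i} = pmf (map_pmf rvD0 (joint F pP pS0 pS1)) i"
    by (simp add: pmf_map vimage_def)
  then show "measure (joint F pP pS0 pS1) {\<omega>. rvD0 \<omega> = i} > 0" using assms by (auto simp: joint_D0)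
  have "measure (joint F pP pS0 pS1) {\<omega>. rvD1 \<omega> = i} = pmf (map_pmf rvD1 (joint F pP pS0 pS1)) i"
    by (simp add: pmf_map vimage_def)
  then show "measure (joint F pP pS0 pS1) {\<omega>. rvD1 \<omega> = i} > 0" using assms by (auto simp: joint_D1)
qed
theorem lemma1:
  fixes F :: nat and M R :: real
    and pP :: "'p::finite pmf" and pS0 :: "'s0::finite pmf" and pS1 :: "'s1::finite pmf"
    and C0 :: "'s0 \<Rightarrow> 'p \<Rightarrow> nat \<Rightarrow> nat \<Rightarrow> nat" and C1 :: "'s1 \<Rightarrow> 'p \<Rightarrow> nat \<Rightarrow> nat \<Rightarrow> nat"
    and E :: "nat \<Rightarrow> nat \<Rightarrow> nat \<Rightarrow> nat \<Rightarrow> 'p \<Rightarrow> 's0 \<Rightarrow> 's1 \<Rightarrow> nat"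
    and J :: "nat \<Rightarrow> nat \<Rightarrow> 'p \<Rightarrow> 's0 \<Rightarrow> 's1 \<Rightarrow> 'j::finite"
  assumes "demand_private_scheme F M R pP pS0 pS1 C0 C1 E J"
    and "i \<in> {0, 1::nat}" and "j \<in> {0, 1::nat}"
  shows "(let \<Omega> = joint F pP pS0 pS1; it = (i + 1) mod 2;
              V1 = (\<lambda>\<omega>. (rvX E J \<omega>, rvZ1 C1 \<omega>, rvW j \<omega>));
              V0 = (\<lambda>\<omega>. (rvX E J \<omega>, rvZ0 C0 \<omega>, rvW j \<omega>)) in
          cond_dist \<Omega> V1 (\<lambda>\<omega>. rvD1 \<omega> = j) =
            cond_dist \<Omega> V1 (\<lambda>\<omega>. rvD0 \<omega> = i \<and> rvD1 \<omega> = j) \<and>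
          cond_dist \<Omega> V1 (\<lambda>\<omega>. rvD0 \<omega> = i \<and> rvD1 \<omega> = j) =
            cond_dist \<Omega> V1 (\<lambda>\<omega>. rvD0 \<omega> = it \<and> rvD1 \<omega> = j) \<and>
          cond_dist \<Omega> V0 (\<lambda>\<omega>. rvD0 \<omega> = j) =
            cond_dist \<Omega> V0 (\<lambda>\<omega>. rvD0 \<omega> = j \<and> rvD1 \<omega> = i) \<and>
          cond_dist \<Omega> V0 (\<lambda>\<omega>. rvD0 \<omega> = j \<and> rvD1 \<omega> = i) =
            cond_dist \<Omega> V0 (\<lambda>\<omega>. rvD0 \<omega> = j \<and> rvD1 \<omega> = it))"
proof -
  define \<Omega> where "\<Omega> = joint F pP pS0 pS1"
  note dps = assms(1)[unfolded demand_private_scheme_def Let_def, folded \<Omega>_def]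
  obtain g0 where g0: "\<forall>\<omega>\<in>set_pmf \<Omega>. g0 (rvD0 \<omega>, rvS0 \<omega>, rvX E J \<omega>, rvZ0 C0 \<omega>) = rvW (rvD0 \<omega>) \<omega>"
    using dps by blast
  obtain g1 where g1: "\<forall>\<omega>\<in>set_pmf \<Omega>. g1 (rvD1 \<omega>, rvS1 \<omega>, rvX E J \<omega>, rvZ1 C1 \<omega>) = rvW (rvD1 \<omega>) \<omega>"
    using dps by blast
  have mi1: "mutual_info \<Omega> rvD1 (\<lambda>\<omega>. (rvZ0 C0 \<omega>, rvX E J \<omega>, rvD0 \<omega>)) = 0" using dps by blast
  have mi0: "mutual_info \<Omega> rvD0 (\<lambda>\<omega>. (rvZ1 C1 \<omega>, rvX E J \<omega>, rvD1 \<omega>)) = 0" using dps by blast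
  have fin: "finite (set_pmf \<Omega>)" unfolding \<Omega>_def by (rule joint_finite)
  note ind0 = mi_zero_indep[OF fin mi0]
  note ind1 = mi_zero_indep[OF fin mi1]
  define V1 where "V1 = (\<lambda>\<omega>. (rvX E J \<omega>, rvZ1 C1 \<omega>, rvW j \<omega>))"
  define V0 where "V0 = (\<lambda>\<omega>. (rvX E J \<omega>, rvZ0 C0 \<omega>, rvW j \<omega>))"
  have A: "cond_dist \<Omega> V1 (\<lambda>\<omega>. rvD1 \<omega> = j) = cond_dist \<Omega> V1 (\<lambda>\<omega>. rvD0 \<omega> = k \<and> rvD1 \<omega> = j)"
    if k: "k \<in> {0,1::nat}" for k
  proof (rule cond_indep[OF ind0, where Dbf = "\<lambda>y. snd (snd y)"
        and h = "\<lambda>y. (fst (snd y), fst y, g1 (j, snd (fst y), fst (snd y), fst y))"])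
    show "measure \<Omega> {\<omega>. rvD0 \<omega> = k} > 0" unfolding \<Omega>_def using joint_Dpos[OF k] by blast
    show "measure \<Omega> {\<omega>. rvD1 \<omega> = j} > 0" unfolding \<Omega>_def using joint_Dpos[OF assms(3)] by blast
    fix \<omega> assume "\<omega> \<in> set_pmf \<Omega>" "rvD1 \<omega> = j"
    then show "V1 \<omega> = (\<lambda>y. (fst (snd y), fst y, g1 (j, snd (fst y), fst (snd y), fst y)))
                 (rvZ1 C1 \<omega>, rvX E J \<omega>, rvD1 \<omega>)"
      using g1 by (auto simp: V1_def rvZ1_def)
  qed simp
  have B: "cond_dist \<Omega> V0 (\<lambda>\<omega>. rvD0 \<omega> = j) = cond_dist \<Omega> V0 (\<lambda>\<omega>. rvD1 \<omega> = k \<and> rvD0 \<omega> = j)"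
    if k: "k \<in> {0,1::nat}" for k
  proof (rule cond_indep[OF ind1, where Dbf = "\<lambda>y. snd (snd y)"
        and h = "\<lambda>y. (fst (snd y), fst y, g0 (j, snd (fst y), fst (snd y), fst y))"])
    show "measure \<Omega> {\<omega>. rvD1 \<omega> = k} > 0" unfolding \<Omega>_def using joint_Dpos[OF k] by blast
    show "measure \<Omega> {\<omega>. rvD0 \<omega> = j} > 0" unfolding \<Omega>_def using joint_Dpos[OF assms(3)] by blast
    fix \<omega> assume "\<omega> \<in> set_pmf \<Omega>" "rvD0 \<omega> = j"
    then show "V0 \<omega> = (\<lambda>y. (fst (snd y), fst y, g0 (j, snd (fst y), fst (snd y), fst y)))
                 (rvZ0 C0 \<omega>, rvX E J \<omega>, rvD0 \<omega>)"
      using g0 by (auto simp: V0_def rvZ0_def)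
  qed simp
  have B': "cond_dist \<Omega> V0 (\<lambda>\<omega>. rvD0 \<omega> = j) = cond_dist \<Omega> V0 (\<lambda>\<omega>. rvD0 \<omega> = j \<and> rvD1 \<omega> = k)"
    if k: "k \<in> {0,1::nat}" for k
  proof -
    have e: "(\<lambda>\<omega>. rvD0 \<omega> = j \<and> rvD1 \<omega> = k) = (\<lambda>\<omega>. rvD1 \<omega> = k \<and> rvD0 \<omega> = j)" by auto
    show ?thesis unfolding e by (rule B[OF k])
  qed
  have it: "(i + 1) mod 2 \<in> {0,1::nat}" by auto
  show ?thesis
    unfolding Let_def \<Omega>_def[symmetric] V0_def[symmetric] V1_def[symmetric]
    using A[OF assms(2)] A[OF it] B'[OF assms(2)] B'[OF it] by simp
qed

end
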